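(* Sign correctness may fail for multifold edges under monotonic semantics: there exist a gradual semantics $\sigma$ satisfying monotonicity on all acyclic QBAFs, an acyclic QBAF $\mathcal{Q}=\langle\mathcal{A},\mathcal{R}^-,\mathcal{R}^+,\tau\rangle$, an argument $\alpha\in\mathcal{A}$ and an edge $r\in\mathcal{R}$ that is multifold w.r.t. $\alpha$ such that sign correctness fails, i.e. either $r\in\mathcal{R}^-$ and $\phi^\alpha_\sigma(r)>0$, or $r\in\mathcal{R}^+$ and $\phi^\alpha_\sigma(r)<0$.
   Context: A QBAF is a quadruple $\mathcal{Q}=\langle\mathcal{A},\mathcal{R}^-,\mathcal{R}^+,\tau\rangle$ with $\mathcal{A}$ a finite set of arguments, $\mathcal{R}^-,\mathcal{R}^+\subseteq\mathcal{A}\times\mathcal{A}$ disjoint attack and support relations, and $\tau:\mathcal{A}\to[0,1]$ base scores; $\mathcal{R}=\mathcal{R}^-\cup\mathcal{R}^+$, $\mathcal{R}(\beta)=\{(\beta,\gamma)\in\mathcal{R}\}$; acyclic means $(\mathcal{A},\mathcal{R})$ has no directed cycle. A gradual semantics $\sigma$ assigns strengths in $[0,1]$ to arguments of QBAFs. For $\mathcal{S}\subseteq\mathcal{R}$, $\sigma_{\mathcal{S}}(\alpha)$ is the strength of $\alpha$ in $\langle\mathcal{A},\mathcal{R}^-\cap\mathcal{S},\mathcal{R}^+\cap\mathcal{S},\tau\rangle$; for $\tau':\mathcal{A}\to[0,1]$, $\sigma_{\tau'}(\alpha)$ is the strength of $\alpha$ in $\langle\mathcal{A},\mathcal{R}^-,\mathcal{R}^+,\tau'\rangle$.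 The RAE is $\phi^\alpha_\sigma(r)=\sum_{\mathcal{S}\subseteq\mathcal{R}\setminus\{r\}}\frac{(|\mathcal{R}|-|\mathcal{S}|-1)!|\mathcal{S}|!}{|\mathcal{R}|!}[\sigma_{\mathcal{S}\cup\{r\}}(\alpha)-\sigma_{\mathcal{S}}(\alpha)]$. $\sigma$ satisfies monotonicity on a class of QBAFs if for every QBAF in the class, every $\alpha,\beta\in\mathcal{A}$ with $\alpha\neq\beta$ and $\mathcal{R}(\beta)=\{(\beta,\alpha)\}$, and every $\tau':\mathcal{A}\to[0,1]$: (1) if $(\beta,\alpha)\in\mathcal{R}^-$ then $\sigma(\alpha)\le\sigma_{\mathcal{R}\setminus\{(\beta,\alpha)\}}(\alpha)$; (2) if $(\beta,\alpha)\in\mathcal{R}^+$ then $\sigma(\alpha)\ge\sigma_{\mathcal{R}\setminus\{(\beta,\alpha)\}}(\alpha)$; (3) if $(\beta,\alpha)\in\mathcal{R}^-$, $\tau(\beta)\le\tau'(\beta)$ and $\tau'=\tau$ on $\mathcal{A}\setminus\{\beta\}$, then $\sigma(\alpha)\ge\sigma_{\tau'}(\alpha)$; (4) if $(\beta,\alpha)\in\mathcal{R}^+$, $\tau(\beta)\le\tau'(\beta)$ and $\tau'=\tau$ on $\mathcal{A}\setminus\{\beta\}$, then $\sigma(\alpha)\le\sigma_{\tau'}(\alpha)$. A path from $\gamma$ to $\alpha$ is a finite sequence of edges $(x_0,x_1),\dots,(x_{k-1},x_k)\in\mathcal{R}$ with $x_0=\gamma$, $x_k=\alpha$. An edge $(\beta,\gamma)\in\mathcal{R}$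 with $\beta\neq\alpha$ is multifold w.r.t. $\alpha$ if $\gamma\neq\alpha$ and there is more than one path from $\gamma$ to $\alpha$ in $\mathcal{Q}$. *)

theory Defs
  imports Complex_Main
begin

text \<open>A QBAF over arguments of type 'a: arguments, attacks, supports, base scores.
  Base scores are functions on the whole type, normalised to 0 outside the argument set.\<close>
record 'a qbaf =
  qargs :: "'a set"
  qatt  :: "('a \<times> 'a) set"
  qsupp :: "('a \<times> 'a) set"
  qtau  :: "'a \<Rightarrow> real"

definition qrel :: "'a qbaf \<Rightarrow> ('a \<times> 'a) set" where
  "qrel Q = qatt Q \<union> qsupp Q"

definition wf_qbaf :: "'a qbaf \<Rightarrow> bool" where
  "wf_qbaf Q \<longleftrightarrow> finite (qargs Q) \<and> qrel Q \<subseteq> qargs Q \<times> qargs Q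
     \<and> qatt Q \<inter> qsupp Q = {}
     \<and> (\<forall>x\<in>qargs Q. 0 \<le> qtau Q x \<and> qtau Q x \<le> 1)
     \<and> (\<forall>x. x \<notin> qargs Q \<longrightarrow> qtau Q x = 0)"

definition acyclic_qbaf :: "'a qbaf \<Rightarrow> bool" where
  "acyclic_qbaf Q \<longleftrightarrow> acyclic (qrel Q)"

definition out_edges :: "'a qbaf \<Rightarrow> 'a \<Rightarrow> ('a \<times> 'a) set" where
  "out_edges Q b = {e \<in> qrel Q. fst e = b}"

definition restr :: "'a qbaf \<Rightarrow> ('a \<times> 'a) set \<Rightarrow> 'a qbaf" where
  "restr Q S = Q\<lparr>qatt := qatt Q \<inter> S, qsupp := qsupp Q \<inter> S\<rparr>"

definition gradual_semantics :: "('a qbaf \<Rightarrow> 'a \<Rightarrow> real) \<Rightarrow> bool" where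
  "gradual_semantics \<sigma> \<longleftrightarrow>
     (\<forall>Q. wf_qbaf Q \<longrightarrow> (\<forall>a\<in>qargs Q. 0 \<le> \<sigma> Q a \<and> \<sigma> Q a \<le> 1))"

definition monotonic_acyclic :: "('a qbaf \<Rightarrow> 'a \<Rightarrow> real) \<Rightarrow> bool" where
  "monotonic_acyclic \<sigma> \<longleftrightarrow>
     (\<forall>Q. wf_qbaf Q \<and> acyclic_qbaf Q \<longrightarrow>
       (\<forall>a\<in>qargs Q. \<forall>b\<in>qargs Q. a \<noteq> b \<and> out_edges Q b = {(b, a)} \<longrightarrow>
          ((b, a) \<in> qatt Q \<longrightarrow> \<sigma> Q a \<le> \<sigma> (restr Q (qrel Q - {(b, a)})) a)
        \<and> ((b, a) \<in> qsupp Q \<longrightarrow> \<sigma> Q a \<ge> \<sigma> (restr Q (qrel Q - {(b, a)})) a)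
        \<and> (\<forall>\<tau>'. wf_qbaf (Q\<lparr>qtau := \<tau>'\<rparr>) \<and> qtau Q b \<le> \<tau>' b
               \<and> (\<forall>x\<in>qargs Q - {b}. \<tau>' x = qtau Q x) \<longrightarrow>
             ((b, a) \<in> qatt Q \<longrightarrow> \<sigma> Q a \<ge> \<sigma> (Q\<lparr>qtau := \<tau>'\<rparr>) a)
           \<and> ((b, a) \<in> qsupp Q \<longrightarrow> \<sigma> Q a \<le> \<sigma> (Q\<lparr>qtau := \<tau>'\<rparr>) a))))"

definition is_path :: "('a \<times> 'a) set \<Rightarrow> 'a \<Rightarrow> 'a \<Rightarrow> ('a \<times> 'a) list \<Rightarrow> bool" where
  "is_path R x y es \<longleftrightarrow> es \<noteq> [] \<and> set es \<subseteq> R \<and> fst (hd es) = x \<and> snd (last es) = y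
     \<and> (\<forall>i. i + 1 < length es \<longrightarrow> snd (es ! i) = fst (es ! (i + 1)))"

definition multifold :: "'a qbaf \<Rightarrow> 'a \<Rightarrow> ('a \<times> 'a) \<Rightarrow> bool" where
  "multifold Q a r \<longleftrightarrow> r \<in> qrel Q \<and> fst r \<noteq> a \<and> snd r \<noteq> a
     \<and> (\<exists>p1 p2. p1 \<noteq> p2 \<and> is_path (qrel Q) (snd r) a p1 \<and> is_path (qrel Q) (snd r) a p2)"

text \<open>Relation attribution explanation (Shapley value of the edge r for the strength of a).\<close>
definition RAE :: "('a qbaf \<Rightarrow> 'a \<Rightarrow> real) \<Rightarrow> 'a qbaf \<Rightarrow> 'a \<Rightarrow> ('a \<times> 'a) \<Rightarrow> real" where
  "RAE \<sigma> Q a r = (\<Sum>S\<in>Pow (qrel Q - {r}).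
     (fact (card (qrel Q) - card S - 1) * fact (card S) / fact (card (qrel Q)))
     * (\<sigma> (restr Q (S \<union> {r})) a - \<sigma> (restr Q S) a))"

end

theory Submission
  imports Defs
begin

definition sig :: "nat qbaf \<Rightarrow> nat \<Rightarrow> real" where
  "sig Q x = (if \<exists>b g y. (b,g) \<in> qatt Q \<and> g \<noteq> x \<and> (g,x) \<in> qrel Q \<and> (g,y) \<in> qrel Q \<and> y \<noteq> x
              then 3/4 else 1/2)"

lemma sig_gradual: "gradual_semantics sig"
  unfolding gradual_semantics_def sig_def by auto

lemma sig_mono: "monotonic_acyclic sig"
  unfolding monotonic_acyclic_def
proof (intro allI impI ballI)
  fix Q :: "nat qbaf" and a b0
  assume h: "a \<noteq> b0 \<and> out_edges Q b0 = {(b0, a)}"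
  show "((b0, a) \<in> qatt Q \<longrightarrow> sig Q a \<le> sig (restr Q (qrel Q - {(b0, a)})) a)
        \<and> ((b0, a) \<in> qsupp Q \<longrightarrow> sig Q a \<ge> sig (restr Q (qrel Q - {(b0, a)})) a)
        \<and> (\<forall>\<tau>'. wf_qbaf (Q\<lparr>qtau := \<tau>'\<rparr>) \<and> qtau Q b0 \<le> \<tau>' b0
               \<and> (\<forall>x\<in>qargs Q - {b0}. \<tau>' x = qtau Q x) \<longrightarrow>
             ((b0, a) \<in> qatt Q \<longrightarrow> sig Q a \<ge> sig (Q\<lparr>qtau := \<tau>'\<rparr>) a)
           \<and> ((b0, a) \<in> qsupp Q \<longrightarrow> sig Q a \<le> sig (Q\<lparr>qtau := \<tau>'\<rparr>) a))"
  proof (intro conjI allI)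
  show "(b0, a) \<in> qatt Q \<longrightarrow> sig Q a \<le> sig (restr Q (qrel Q - {(b0, a)})) a"
  proof
    have E: "\<exists>b g y. (b,g) \<in> qatt (restr Q (qrel Q - {(b0, a)})) \<and> g \<noteq> a
       \<and> (g,a) \<in> qrel (restr Q (qrel Q - {(b0, a)}))
       \<and> (g,y) \<in> qrel (restr Q (qrel Q - {(b0, a)})) \<and> y \<noteq> a"
      if w: "(b,g) \<in> qatt Q" "g \<noteq> a" "(g,a) \<in> qrel Q" "(g,y) \<in> qrel Q" "y \<noteq> a" for b g y
    proof -
      have "g \<noteq> b0"
      proof
        assume "g = b0"
        then have "(g,y) \<in> out_edges Q b0" using w unfolding out_edges_def by auto
        then show False using h w by auto
      qed
      then show ?thesis using w
        by (intro exI[of _ b] exI[of _ g] exI[of _ y]) (auto simp: restr_def qrel_def)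
    qed
    show "sig Q a \<le> sig (restr Q (qrel Q - {(b0, a)})) a"
    proof (cases "\<exists>b g y. (b,g) \<in> qatt Q \<and> g \<noteq> a \<and> (g,a) \<in> qrel Q \<and> (g,y) \<in> qrel Q \<and> y \<noteq> a")
      case True
      then have "\<exists>b g y. (b,g) \<in> qatt (restr Q (qrel Q - {(b0, a)})) \<and> g \<noteq> a
       \<and> (g,a) \<in> qrel (restr Q (qrel Q - {(b0, a)}))
       \<and> (g,y) \<in> qrel (restr Q (qrel Q - {(b0, a)})) \<and> y \<noteq> a" using E by blast
      then have "sig (restr Q (qrel Q - {(b0, a)})) a = 3/4" unfolding sig_def by (simp only: if_True)
      moreover have "sig Q a \<le> 3/4" by (simp add: sig_def)
      ultimately show ?thesis by linarith
    next
      case False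
      then have "sig Q a = 1/2" unfolding sig_def by (simp only: if_False)
      moreover have "sig (restr Q (qrel Q - {(b0, a)})) a \<ge> 1/2" by (simp add: sig_def)
      ultimately show ?thesis by linarith
    qed
  qed
  show "(b0, a) \<in> qsupp Q \<longrightarrow> sig (restr Q (qrel Q - {(b0, a)})) a \<le> sig Q a"
    unfolding sig_def by (auto simp: restr_def qrel_def split: if_splits)
  fix \<tau>'
  have "sig (Q\<lparr>qtau := \<tau>'\<rparr>) a = sig Q a" unfolding sig_def by (simp add: qrel_def)
  then show "wf_qbaf (Q\<lparr>qtau := \<tau>'\<rparr>) \<and> qtau Q b0 \<le> \<tau>' b0
               \<and> (\<forall>x\<in>qargs Q - {b0}. \<tau>' x = qtau Q x) \<longrightarrow>
             ((b0, a) \<in> qatt Q \<longrightarrow> sig Q a \<ge> sig (Q\<lparr>qtau := \<tau>'\<rparr>) a)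
           \<and> ((b0, a) \<in> qsupp Q \<longrightarrow> sig Q a \<le> sig (Q\<lparr>qtau := \<tau>'\<rparr>) a)" by simp
  qed
qed

definition QQ :: "nat qbaf" where
  "QQ = \<lparr>qargs = {0,1,2,3}, qatt = {(3,1)}, qsupp = {(1,0),(1,2),(2,0)}, qtau = (\<lambda>x. 0)\<rparr>"

lemma QQ_rel: "qrel QQ = {(3,1),(1,0),(1,2),(2,0)}"
  by (auto simp: qrel_def QQ_def)

lemma sig_QQ: "T \<subseteq> qrel QQ \<Longrightarrow>
  sig (restr QQ T) 0 = (if (3,1) \<in> T \<and> (1,0) \<in> T \<and> (1,2) \<in> T then 3/4 else 1/2)"
  unfolding sig_def by (auto simp: restr_def qrel_def QQ_def)

lemma QQ_acyclic: "acyclic_qbaf QQ"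
proof -
  define h :: "nat \<Rightarrow> nat" where "h = (\<lambda>x. if x = 3 then 0 else if x = 1 then 1 else if x = 2 then 2 else 3)"
  have "qrel QQ \<subseteq> inv_image less_than h" by (auto simp: QQ_rel h_def)
  then have "wf (qrel QQ)" using wf_subset wf_inv_image wf_less_than by blast
  then show ?thesis unfolding acyclic_qbaf_def by (rule wf_acyclic)
qed

theorem proposition8:
  shows "\<exists>(\<sigma> :: nat qbaf \<Rightarrow> nat \<Rightarrow> real) Q a r.
           gradual_semantics \<sigma> \<and> monotonic_acyclic \<sigma>
         \<and> wf_qbaf Q \<and> acyclic_qbaf Q \<and> a \<in> qargs Q \<and> r \<in> qrel Q \<and> multifold Q a r
         \<and> ((r \<in> qatt Q \<and> RAE \<sigma> Q a r > 0) \<or> (r \<in> qsupp Q \<and> RAE \<sigma> Q a r < 0))"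
proof (intro exI conjI)
  show "gradual_semantics sig" by (rule sig_gradual)
  show "monotonic_acyclic sig" by (rule sig_mono)
  show "wf_qbaf QQ" by (auto simp: wf_qbaf_def QQ_rel) (auto simp: QQ_def)
  show "acyclic_qbaf QQ" by (rule QQ_acyclic)
  show "(0::nat) \<in> qargs QQ" by (simp add: QQ_def)
  show "(3,1) \<in> qrel QQ" by (simp add: QQ_rel)
  have p2: "is_path (qrel QQ) 1 0 [(1,2),(2,0)]"
    unfolding is_path_def QQ_rel by (auto simp: less_Suc_eq)
  have p1: "is_path (qrel QQ) 1 0 [(1,0)]"
    unfolding is_path_def QQ_rel by auto
  show "multifold QQ 0 (3,1)"
  proof -
    have "[(1::nat,0::nat)] \<noteq> [(1,2),(2,0)]" by simp
    then have "\<exists>p1 p2. p1 \<noteq> p2 \<and> is_path (qrel QQ) 1 0 p1 \<and> is_path (qrel QQ) 1 0 p2"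
      using p1 p2 by blast
    then show ?thesis unfolding multifold_def by (simp add: QQ_rel)
  qed
  have card: "card (qrel QQ) = 4" by (simp add: QQ_rel)
  have "0 < RAE sig QQ 0 (3,1)"
    unfolding RAE_def
  proof (rule sum_pos2)
    show "finite (Pow (qrel QQ - {(3, 1)}))" by (simp add: QQ_rel)
    show "{(1,0),(1,2)} \<in> Pow (qrel QQ - {(3, 1)})" by (auto simp: QQ_rel)
    show "0 < fact (card (qrel QQ) - card {(1::nat,0::nat),(1,2)} - 1) * fact (card {(1::nat,0::nat),(1,2)}) / fact (card (qrel QQ)) *
        (sig (restr QQ ({(1,0),(1,2)} \<union> {(3, 1)})) 0 - sig (restr QQ {(1,0),(1,2)}) 0)"
      by (subst sig_QQ, simp add: QQ_rel)+ (simp add: card)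
      fix S assume S: "S \<in> Pow (qrel QQ - {(3, 1)})"
      have "sig (restr QQ S) 0 \<le> sig (restr QQ (S \<union> {(3, 1)})) 0"
        using S by (subst sig_QQ, force simp: QQ_rel)+ auto
      then show "0 \<le> fact (card (qrel QQ) - card S - 1) * fact (card S) / fact (card (qrel QQ)) *
        (sig (restr QQ (S \<union> {(3, 1)})) 0 - sig (restr QQ S) 0)"
        by (intro mult_nonneg_nonneg) auto
  qed
  then show "(3,1) \<in> qatt QQ \<and> RAE sig QQ 0 (3,1) > 0 \<or> (3,1) \<in> qsupp QQ \<and> RAE sig QQ 0 (3,1) < 0"
    by (simp add: QQ_def)
qed

end
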